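(* Let $Q\in\mathbb{R}^{l\times l}$ be symmetric, $S\in\mathbb{R}^{l\times m}$, and $R\in\mathbb{R}^{m\times m}$ symmetric positive semi-definite with symmetric PSD square root $\sqrt R$. Let $l:\mathbb{R}^n\to\mathbb{R}^m$ be a map and $V:\mathbb{R}^n\to\mathbb{R}_{\ge0}$ differentiable with $\nabla V(x)\neq0$ for all $x$. For maps $f:\mathbb{R}^n\to\mathbb{R}^n$, $g:\mathbb{R}^n\to\mathbb{R}^{n\times m}$, $h:\mathbb{R}^n\to\mathbb{R}^l$ define $\mathcal{P}_{l,V}(f,g,h)=(f_{\mathbf d},g_{\mathbf d},h_{\mathbf d})$ by $$f_{\mathbf d}=P^{\mathtt C}_{\nabla V}f+\frac{h^{\mathrm T}Qh-\|l\|^2}{\|\nabla V\|^2}\nabla V,\quad g_{\mathbf d}=P^{\mathtt C}_{\nabla V}g+\frac{2}{\|\nabla V\|^2}\nabla V\big(h^{\mathrm T}S-l^{\mathrm T}\sqrt R\big),\quad h_{\mathbf d}=h$$ (all evaluated pointwise at $x$). Then: (a) $\mathcal P_{l,V}\circ\mathcal P_{l,V}=\mathcal P_{l,V}$; (b) for every $(f,g,h)$, the projected triple satisfies, for all $x$, $\nabla V^{\mathrm T}f_{\mathbf d}=h^{\mathrm T}Qh-\|l\|^2$ and $\tfrac12\nabla V^{\mathrm T}g_{\mathbf d}=h^{\mathrm T}S-l^{\mathrm T}\sqrt R$; consequently the system $\dot x=f_{\mathbf d}(x)+g_{\mathbf d}(x)u$, $y=h_{\mathbf d}(x)$ is dissipative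 with storage function $V$, i.e. for every input $u$ and corresponding solution, $V(x(t_1))-V(x(t_0))\le\int_{t_0}^{t_1}w(u(s),y(s))\,ds$ for all $t_0\le t_1$; (c) conversely, if a triple $(f,g,h)$ satisfies, for all $x$, $\nabla V^{\mathrm T}f=h^{\mathrm T}Qh-\|\lambda\|^2$, $\tfrac12\nabla V^{\mathrm T}g=h^{\mathrm T}S-\lambda^{\mathrm T}W$ and $W^{\mathrm T}W=R$ for some maps $\lambda:\mathbb{R}^n\to\mathbb{R}^m$, $W:\mathbb{R}^n\to\mathbb{R}^{m\times m}$, then there is $\tilde l:\mathbb{R}^n\to\mathbb{R}^m$ with $(f,g,h)=\mathcal P_{\tilde l,V}(f,g,h)$.
   Context: Input-output system (no direct path): $\dot x=f(x)+g(x)u$, $y=h(x)$, $x(t)\in\mathbb{R}^n$, $u(t)\in\mathbb{R}^m$, $y(t)\in\mathbb{R}^l$. Supply rate $w(u,y)=y^{\mathrm T}Qy+2y^{\mathrm T}Su+u^{\mathrm T}Ru$. $P^{\mathtt C}_{\nabla V}:=I_n-\frac{1}{\|\nabla V\|^2}\nabla V\nabla V^{\mathrm T}$, the orthogonal projection onto the complement of $\mathrm{span}\{\nabla V(x)\}$; $\nabla V$ is the gradient as a column vector. *)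

theory Defs
  imports "HOL-Analysis.Analysis"
begin

text \<open>Matrices in R^{p x q} are rendered as real^'q^'p (rows indexed by 'p).\<close>

definition outer_prod :: "real^'n \<Rightarrow> real^'m \<Rightarrow> real^'m^'n" where
  "outer_prod a b = (\<chi> i j. a $ i * b $ j)"

definition psd_mat :: "real^'m^'m \<Rightarrow> bool" where
  "psd_mat A \<longleftrightarrow> (\<forall>v. 0 \<le> v \<bullet> (A *v v))"

definition proj_compl :: "real^'n \<Rightarrow> real^'n^'n" where
  "proj_compl a = mat 1 - (1 / (norm a)\<^sup>2) *\<^sub>R outer_prod a a"

definition supply_rate :: "real^'l^'l \<Rightarrow> real^'m^'l \<Rightarrow> real^'m^'m \<Rightarrow> real^'m \<Rightarrow> real^'l \<Rightarrow> real" where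
  "supply_rate Q S R u y = y \<bullet> (Q *v y) + 2 * (y \<bullet> (S *v u)) + u \<bullet> (R *v u)"

definition proj_PlV ::
  "real^'l^'l \<Rightarrow> real^'m^'l \<Rightarrow> real^'m^'m \<Rightarrow> (real^'n \<Rightarrow> real^'m) \<Rightarrow> (real^'n \<Rightarrow> real^'n)
   \<Rightarrow> (real^'n \<Rightarrow> real^'n) \<times> (real^'n \<Rightarrow> real^'m^'n) \<times> (real^'n \<Rightarrow> real^'l)
   \<Rightarrow> (real^'n \<Rightarrow> real^'n) \<times> (real^'n \<Rightarrow> real^'m^'n) \<times> (real^'n \<Rightarrow> real^'l)" where
  "proj_PlV Q S sqrtR lm gV fgh =
     (case fgh of (f, g, h) \<Rightarrow>
       ((\<lambda>x. proj_compl (gV x) *v f x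
              + ((h x \<bullet> (Q *v h x) - (norm (lm x))\<^sup>2) / (norm (gV x))\<^sup>2) *\<^sub>R gV x),
        (\<lambda>x. proj_compl (gV x) ** g x
              + (2 / (norm (gV x))\<^sup>2) *\<^sub>R outer_prod (gV x) (h x v* S - lm x v* sqrtR)),
        h))"

definition dissipative ::
  "real^'l^'l \<Rightarrow> real^'m^'l \<Rightarrow> real^'m^'m \<Rightarrow> (real^'n \<Rightarrow> real)
   \<Rightarrow> (real^'n \<Rightarrow> real^'n) \<Rightarrow> (real^'n \<Rightarrow> real^'m^'n) \<Rightarrow> (real^'n \<Rightarrow> real^'l) \<Rightarrow> bool" where
  "dissipative Q S R V f g h \<longleftrightarrow>
     (\<forall>(u :: real \<Rightarrow> real^'m) (x :: real \<Rightarrow> real^'n) t0 t1.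
        t0 \<le> t1
        \<and> (\<forall>t\<in>{t0..t1}. (x has_vector_derivative (f (x t) + g (x t) *v u t)) (at t within {t0..t1}))
        \<and> (\<lambda>s. supply_rate Q S R (u s) (h (x s))) integrable_on {t0..t1}
        \<longrightarrow> V (x t1) - V (x t0) \<le> integral {t0..t1} (\<lambda>s. supply_rate Q S R (u s) (h (x s))))"

end

theory Submission
  imports Defs
begin

lemma outer_scale: "outer_prod a (k *\<^sub>R w) = k *\<^sub>R outer_prod (a::real^'n) (w::real^'m)"
  by (simp add: outer_prod_def vec_eq_iff)

lemma sc_mv: "((k::real) *\<^sub>R A) *v v = k *\<^sub>R (A *v v)" for A :: "real^'n^'m"
  by (simp add: vec_eq_iff matrix_vector_mult_def sum_distrib_left algebra_simps)
lemma sc_mm_l: "((k::real) *\<^sub>R A) ** B = k *\<^sub>R (A ** B)" for A :: "real^'n^'m" and B :: "real^'k^'n"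
  by (simp add: vec_eq_iff matrix_matrix_mult_def sum_distrib_left algebra_simps)
lemma sc_mm_r: "A ** ((k::real) *\<^sub>R B) = k *\<^sub>R (A ** B)" for A :: "real^'n^'m" and B :: "real^'k^'n"
  by (simp add: vec_eq_iff matrix_matrix_mult_def sum_distrib_left algebra_simps)
lemma diff_mm: "(A - B) ** C = A ** C - B ** C" for A :: "real^'n^'m" and C :: "real^'k^'n"
  by (simp add: vec_eq_iff matrix_matrix_mult_def sum_subtractf algebra_simps)

lemma outer_mv: "outer_prod a b *v v = (b \<bullet> v) *\<^sub>R (a::real^'n)" for b v :: "real^'m"
  by (simp add: outer_prod_def vec_eq_iff matrix_vector_mult_def inner_vec_def sum_distrib_left algebra_simps)

lemma proj_mv: "proj_compl a *v v = v - ((a \<bullet> v) / (norm a)\<^sup>2) *\<^sub>R (a::real^'n)"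
  by (simp add: proj_compl_def matrix_vector_mult_diff_rdistrib outer_mv sc_mv)

lemma outer_mm: "outer_prod a b ** G = outer_prod (a::real^'n) (b v* (G::real^'m^'k))" for b :: "real^'k"
  by (simp add: outer_prod_def vec_eq_iff matrix_matrix_mult_def vector_matrix_mult_def sum_distrib_left algebra_simps)

lemma proj_mm: "proj_compl a ** G = G - (1 / (norm a)\<^sup>2) *\<^sub>R outer_prod (a::real^'n) (a v* (G::real^'m^'n))"
  by (simp add: proj_compl_def diff_mm outer_mm sc_mm_l)

lemma vm_outer: "a v* outer_prod a w = (a \<bullet> a) *\<^sub>R (w::real^'m)" for a :: "real^'n"
  by (simp add: outer_prod_def vec_eq_iff vector_matrix_mult_def inner_vec_def sum_distrib_right sum_distrib_left algebra_simps)

lemma vm_add: "(a::real^'n) v* (X + Y) = a v* X + a v* (Y::real^'m^'n)"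
  by (simp add: vec_eq_iff vector_matrix_mult_def algebra_simps sum.distrib)

lemma vm_diff: "(a::real^'n) v* (X - Y) = a v* X - a v* (Y::real^'m^'n)"
  by (simp add: vec_eq_iff vector_matrix_mult_def algebra_simps sum_subtractf)

lemma vm_scale: "(a::real^'n) v* (k *\<^sub>R X) = k *\<^sub>R (a v* (X::real^'m^'n))"
  by (rule vector_scaleR_matrix_ac)

lemma vm_proj: "a \<noteq> 0 \<Longrightarrow> (a::real^'n) v* (proj_compl a ** (G::real^'m^'n)) = 0"
  by (simp add: proj_mm vm_diff vm_scale vm_outer power2_norm_eq_inner)

lemma outer_zero[simp]: "outer_prod a (0::real^'m) = (0::real^'m^'n)" for a :: "real^'n"
  by (simp add: outer_prod_def vec_eq_iff)

lemma proj_outer: "a \<noteq> 0 \<Longrightarrow> proj_compl (a::real^'n) ** outer_prod a (w::real^'m) = 0"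
  by (simp add: proj_mm vm_outer outer_scale power2_norm_eq_inner)

lemma proj_vec_a: "a \<noteq> 0 \<Longrightarrow> proj_compl (a::real^'n) *v a = 0"
  by (simp add: proj_mv power2_norm_eq_inner)

lemma idem_f: "a \<noteq> 0 \<Longrightarrow> proj_compl (a::real^'n) *v (proj_compl a *v v + c *\<^sub>R a) = proj_compl a *v v"
  by (simp add: proj_mv power2_norm_eq_inner inner_diff_right algebra_simps)

lemma idem_g: "a \<noteq> 0 \<Longrightarrow> proj_compl (a::real^'n) ** (proj_compl a ** G + c *\<^sub>R outer_prod a w) = proj_compl a ** (G::real^'m^'n)"
  by (simp add: matrix_add_ldistrib sc_mm_r proj_outer proj_mm[of a "proj_compl a ** G"] vm_proj)

lemma dot_f: "a \<noteq> 0 \<Longrightarrow> (a::real^'n) \<bullet> (proj_compl a *v v + (s / (norm a)\<^sup>2) *\<^sub>R a) = s"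
  by (simp add: proj_mv power2_norm_eq_inner inner_diff_right algebra_simps)

lemma dot_g: "a \<noteq> 0 \<Longrightarrow> (1/2) *\<^sub>R ((a::real^'n) v* (proj_compl a ** G + (2 / (norm a)\<^sup>2) *\<^sub>R outer_prod a w)) = (w::real^'m)"
  by (simp add: vm_add vm_proj vm_scale vm_outer power2_norm_eq_inner)


lemma exists_lt:
  fixes lam :: "real^'m" and W sqrtR :: "real^'m^'m"
  assumes sym: "transpose sqrtR = sqrtR" and WW: "transpose W ** W = sqrtR ** sqrtR"
  shows "\<exists>lt. lt v* sqrtR = lam v* W \<and> norm lt = norm lam"
proof -
  let ?r = "range (\<lambda>v. W *v v)"
  obtain y z where y: "y \<in> span ?r" and orth: "\<And>w. w \<in> span ?r \<Longrightarrow> orthogonal z w"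
    and lamyz: "lam = y + z"
    using orthogonal_subspace_decomp_exists[of ?r lam] by blast
  have "span ?r = ?r"
    by (simp add: span_linear_image)
  with y obtain p where p: "y = W *v p" by auto
  have "(z v* W) \<bullet> (z v* W) = z \<bullet> (W *v (z v* W))" by (simp add: dot_lmul_matrix)
  also have "\<dots> = 0" using orth[of "W *v (z v* W)"] by (auto simp: orthogonal_def span_base)
  finally have zW: "z v* W = 0" by simp
  have symv: "\<And>v. v v* sqrtR = sqrtR *v v" by (metis sym transpose_matrix_vector)
  define lt0 where "lt0 = sqrtR *v p"
  have yW: "y v* W = sqrtR *v (sqrtR *v p)"
    by (metis p transpose_matrix_vector matrix_vector_mul_assoc WW)
  have lt0eq: "lt0 v* sqrtR = lam v* W"
    by (simp add: lamyz vector_matrix_left_distrib zW yW symv lt0_def)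
  have n0: "lt0 \<bullet> lt0 = y \<bullet> y"
  proof -
    have "lt0 \<bullet> lt0 = (p v* sqrtR) \<bullet> (sqrtR *v p)" by (simp add: lt0_def symv)
    also have "\<dots> = p \<bullet> (sqrtR *v (sqrtR *v p))" by (simp add: dot_lmul_matrix)
    also have "\<dots> = (y v* W) \<bullet> p" by (simp add: yW inner_commute)
    also have "\<dots> = y \<bullet> y" by (simp add: dot_lmul_matrix p)
    finally show ?thesis .
  qed
  have yz: "y \<bullet> z = 0" using orth[OF y] by (simp add: orthogonal_def inner_commute)
  have nlam: "lam \<bullet> lam = y \<bullet> y + z \<bullet> z"
    using yz by (simp add: lamyz inner_add_left inner_add_right inner_commute)
  show ?thesis
  proof (cases "z = 0")
    case True
    then show ?thesis using lt0eq n0 nlam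
      by (intro exI[of _ lt0]) (simp add: norm_eq_sqrt_inner)
  next
    case False
    have "transpose W *v z = 0" using zW by simp
    then have "rank (transpose W) \<noteq> CARD('m)"
      using False matrix_nonfull_linear_equations_eq by blast
    then have "det (transpose W) = 0"
      using det_eq_0_rank rank_bound[of "transpose W"] by (metis min.idem nat_less_le min_def)
    then have "det (sqrtR ** sqrtR) = 0" by (metis WW det_mul mult_zero_left)
    then have "det sqrtR = 0" by (simp add: det_mul)
    then have "rank sqrtR \<noteq> CARD('m)" using det_eq_0_rank by force
    then obtain k where k0: "k \<noteq> 0" and kk: "sqrtR *v k = 0"
      using matrix_nonfull_linear_equations_eq by blast
    define k' where "k' = (norm z / norm k) *\<^sub>R k"
    have k'0: "sqrtR *v k' = 0" by (simp add: k'_def matrix_vector_mult_scaleR kk)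
    have nk': "k' \<bullet> k' = z \<bullet> z"
      using k0 by (simp add: k'_def power2_norm_eq_inner[symmetric] power_divide)
    have ok: "lt0 \<bullet> k' = 0"
    proof -
      have "lt0 \<bullet> k' = (p v* sqrtR) \<bullet> k'" by (simp add: lt0_def symv)
      also have "\<dots> = 0" by (simp add: dot_lmul_matrix k'0)
      finally show ?thesis .
    qed
    have eq: "(lt0 + k') v* sqrtR = lam v* W"
      using lt0eq by (simp add: matrix_vector_right_distrib symv k'0)
    have "(lt0 + k') \<bullet> (lt0 + k') = lam \<bullet> lam"
      using ok n0 nk' nlam by (simp add: inner_add_left inner_add_right inner_commute)
    then show ?thesis using eq
      by (intro exI[of _ "lt0 + k'"]) (simp add: norm_eq_sqrt_inner)
  qed
qed


lemma pointwise:
  fixes a :: "real^'n" and Q :: "real^'l^'l" and S :: "real^'m^'l" and R sqrtR :: "real^'m^'m"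
  assumes a0: "a \<noteq> 0" and sym: "transpose sqrtR = sqrtR" and sq: "sqrtR ** sqrtR = R"
  shows "a \<bullet> ((proj_compl a *v f + ((h \<bullet> (Q *v h) - (norm l)\<^sup>2) / (norm a)\<^sup>2) *\<^sub>R a)
          + (proj_compl a ** G + (2 / (norm a)\<^sup>2) *\<^sub>R outer_prod a (h v* S - l v* sqrtR)) *v u)
         \<le> supply_rate Q S R u h"
proof -
  let ?w = "h v* S - l v* sqrtR"
  have g2: "a v* (proj_compl a ** G + (2 / (norm a)\<^sup>2) *\<^sub>R outer_prod a ?w) = 2 *\<^sub>R ?w"
    using dot_g[OF a0, of G ?w] by (metis (no_types, lifting) scaleR_scaleR scaleR_one
        nonzero_divide_eq_eq zero_neq_numeral times_divide_eq_left divide_self_if mult.commute)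
  have symv: "\<And>v. v v* sqrtR = sqrtR *v v" by (metis sym transpose_matrix_vector)
  have e1: "(h v* S) \<bullet> u = h \<bullet> (S *v u)" by (simp add: dot_lmul_matrix)
  have e2: "(l v* sqrtR) \<bullet> u = l \<bullet> (sqrtR *v u)" by (simp add: dot_lmul_matrix)
  have e3: "u \<bullet> (R *v u) = (sqrtR *v u) \<bullet> (sqrtR *v u)"
    by (metis dot_lmul_matrix symv sq matrix_vector_mul_assoc)
  have nn: "0 \<le> (l + sqrtR *v u) \<bullet> (l + sqrtR *v u)" by simp
  have lhs: "a \<bullet> ((proj_compl a *v f + ((h \<bullet> (Q *v h) - (norm l)\<^sup>2) / (norm a)\<^sup>2) *\<^sub>R a)
          + (proj_compl a ** G + (2 / (norm a)\<^sup>2) *\<^sub>R outer_prod a ?w) *v u)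
        = (h \<bullet> (Q *v h) - (norm l)\<^sup>2) + 2 * (?w \<bullet> u)"
    by (simp only: inner_add_right[of a _ "_ *v u"] dot_f[OF a0] dot_lmul_matrix[symmetric] g2)
       (simp add: inner_commute)
  show ?thesis
    unfolding lhs supply_rate_def using nn e1 e2 e3
    by (simp add: inner_diff_left inner_add_left inner_add_right inner_commute power2_norm_eq_inner algebra_simps)
qed


theorem theorem1:
  fixes Q :: "real^'l^'l" and S :: "real^'m^'l" and R :: "real^'m^'m" and sqrtR :: "real^'m^'m"
    and lm :: "real^'n \<Rightarrow> real^'m"
    and V :: "real^'n \<Rightarrow> real" and gV :: "real^'n \<Rightarrow> real^'n"
  assumes Q_sym: "transpose Q = Q"
    and R_sym: "transpose R = R" and R_psd: "psd_mat R"
    and sqrtR_sym: "transpose sqrtR = sqrtR" and sqrtR_psd: "psd_mat sqrtR"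
    and sqrtR_sq: "sqrtR ** sqrtR = R"
    and V_nonneg: "\<And>x. 0 \<le> V x"
    and V_grad: "\<And>x. (V has_derivative (\<lambda>v. gV x \<bullet> v)) (at x)"
    and gV_nz: "\<And>x. gV x \<noteq> 0"
  shows
    "proj_PlV Q S sqrtR lm gV \<circ> proj_PlV Q S sqrtR lm gV = proj_PlV Q S sqrtR lm gV
     \<and> (\<forall>f g h fd gd hd. proj_PlV Q S sqrtR lm gV (f, g, h) = (fd, gd, hd) \<longrightarrow>
          (\<forall>x. gV x \<bullet> fd x = h x \<bullet> (Q *v h x) - (norm (lm x))\<^sup>2)
        \<and> (\<forall>x. (1/2) *\<^sub>R (gV x v* gd x) = h x v* S - lm x v* sqrtR)
        \<and> dissipative Q S R V fd gd hd)
     \<and> (\<forall>(f :: real^'n \<Rightarrow> real^'n) (g :: real^'n \<Rightarrow> real^'m^'n) (h :: real^'n \<Rightarrow> real^'l)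
          (lam :: real^'n \<Rightarrow> real^'m) (W :: real^'n \<Rightarrow> real^'m^'m).
          (\<forall>x. gV x \<bullet> f x = h x \<bullet> (Q *v h x) - (norm (lam x))\<^sup>2)
        \<and> (\<forall>x. (1/2) *\<^sub>R (gV x v* g x) = h x v* S - lam x v* W x)
        \<and> (\<forall>x. transpose (W x) ** W x = R)
        \<longrightarrow> (\<exists>lt. (f, g, h) = proj_PlV Q S sqrtR lt gV (f, g, h)))"
  proof -
  have a0: "\<And>x. gV x \<noteq> 0" by (rule gV_nz)
  have A: "proj_PlV Q S sqrtR lm gV \<circ> proj_PlV Q S sqrtR lm gV = proj_PlV Q S sqrtR lm gV"
  proof
    fix fgh :: "(real^'n \<Rightarrow> real^'n) \<times> (real^'n \<Rightarrow> real^'m^'n) \<times> (real^'n \<Rightarrow> real^'l)"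
    obtain f g h where fgh: "fgh = (f, g, h)" by (cases fgh) auto
    show "(proj_PlV Q S sqrtR lm gV \<circ> proj_PlV Q S sqrtR lm gV) fgh = proj_PlV Q S sqrtR lm gV fgh"
      by (simp add: fgh proj_PlV_def idem_f[OF a0] idem_g[OF a0])
  qed
  have B: "\<forall>f g h fd gd hd. proj_PlV Q S sqrtR lm gV (f, g, h) = (fd, gd, hd) \<longrightarrow>
          (\<forall>x. gV x \<bullet> fd x = h x \<bullet> (Q *v h x) - (norm (lm x))\<^sup>2)
        \<and> (\<forall>x. (1/2) *\<^sub>R (gV x v* gd x) = h x v* S - lm x v* sqrtR)
        \<and> dissipative Q S R V fd gd hd"
  proof (intro allI impI)
    fix f g h fd gd hd
    assume "proj_PlV Q S sqrtR lm gV (f, g, h) = (fd, gd, hd)"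
    then have fd: "fd = (\<lambda>x. proj_compl (gV x) *v f x
              + ((h x \<bullet> (Q *v h x) - (norm (lm x))\<^sup>2) / (norm (gV x))\<^sup>2) *\<^sub>R gV x)"
      and gd: "gd = (\<lambda>x. proj_compl (gV x) ** g x
              + (2 / (norm (gV x))\<^sup>2) *\<^sub>R outer_prod (gV x) (h x v* S - lm x v* sqrtR))"
      and hd: "hd = h"
      by (auto simp: proj_PlV_def)
    have D: "dissipative Q S R V fd gd hd"
      unfolding dissipative_def
    proof (intro allI impI, elim conjE)
      fix u :: "real \<Rightarrow> real^'m" and x :: "real \<Rightarrow> real^'n" and t0 t1 :: real
      assume t01: "t0 \<le> t1"
        and xd: "\<forall>t\<in>{t0..t1}. (x has_vector_derivative (fd (x t) + gd (x t) *v u t)) (at t within {t0..t1})"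
        and int: "(\<lambda>s. supply_rate Q S R (u s) (hd (x s))) integrable_on {t0..t1}"
      let ?D = "\<lambda>t. gV (x t) \<bullet> (fd (x t) + gd (x t) *v u t)"
      have VD: "((V \<circ> x) has_vector_derivative ?D t) (at t within {t0..t1})" if t: "t \<in> {t0..t1}" for t
      proof -
        have "(x has_derivative (\<lambda>s. s *\<^sub>R (fd (x t) + gd (x t) *v u t))) (at t within {t0..t1})"
          using xd t by (simp add: has_vector_derivative_def)
        moreover have "(V has_derivative (\<lambda>v. gV (x t) \<bullet> v)) (at (x t) within x ` {t0..t1})"
          using V_grad has_derivative_at_withinI by blast
        ultimately have "((V \<circ> x) has_derivative ((\<lambda>v. gV (x t) \<bullet> v) \<circ> (\<lambda>s. s *\<^sub>R (fd (x t) + gd (x t) *v u t)))) (at t within {t0..t1})"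
          by (rule diff_chain_within)
        then show ?thesis
          by (simp add: has_vector_derivative_def o_def mult.commute)
      qed
      have "(?D has_integral ((V \<circ> x) t1 - (V \<circ> x) t0)) {t0..t1}"
        using fundamental_theorem_of_calculus[OF t01 VD] by blast
      moreover have "?D t \<le> supply_rate Q S R (u t) (hd (x t))" for t
        unfolding fd gd hd by (rule pointwise[OF a0 sqrtR_sym sqrtR_sq])
      ultimately show "V (x t1) - V (x t0) \<le> integral {t0..t1} (\<lambda>s. supply_rate Q S R (u s) (hd (x s)))"
        using int by (auto intro: has_integral_le[OF _ integrable_integral])
    qed
    show "(\<forall>x. gV x \<bullet> fd x = h x \<bullet> (Q *v h x) - (norm (lm x))\<^sup>2)
        \<and> (\<forall>x. (1/2) *\<^sub>R (gV x v* gd x) = h x v* S - lm x v* sqrtR)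
        \<and> dissipative Q S R V fd gd hd"
      using D by (simp add: fd gd dot_f[OF a0] dot_g[OF a0])
  qed
  have C: "\<forall>(f :: real^'n \<Rightarrow> real^'n) (g :: real^'n \<Rightarrow> real^'m^'n) (h :: real^'n \<Rightarrow> real^'l)
          (lam :: real^'n \<Rightarrow> real^'m) (W :: real^'n \<Rightarrow> real^'m^'m).
          (\<forall>x. gV x \<bullet> f x = h x \<bullet> (Q *v h x) - (norm (lam x))\<^sup>2)
        \<and> (\<forall>x. (1/2) *\<^sub>R (gV x v* g x) = h x v* S - lam x v* W x)
        \<and> (\<forall>x. transpose (W x) ** W x = R)
        \<longrightarrow> (\<exists>lt. (f, g, h) = proj_PlV Q S sqrtR lt gV (f, g, h))"
  proof (intro allI impI, elim conjE)
    fix f :: "real^'n \<Rightarrow> real^'n" and g :: "real^'n \<Rightarrow> real^'m^'n" and h :: "real^'n \<Rightarrow> real^'l"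
      and lam :: "real^'n \<Rightarrow> real^'m" and W :: "real^'n \<Rightarrow> real^'m^'m"
    assume hf: "\<forall>x. gV x \<bullet> f x = h x \<bullet> (Q *v h x) - (norm (lam x))\<^sup>2"
      and hg: "\<forall>x. (1/2) *\<^sub>R (gV x v* g x) = h x v* S - lam x v* W x"
      and hW: "\<forall>x. transpose (W x) ** W x = R"
    have "\<forall>x. \<exists>lt. lt v* sqrtR = lam x v* W x \<and> norm lt = norm (lam x)"
      using exists_lt[OF sqrtR_sym] hW sqrtR_sq by metis
    then obtain lt where lt: "\<And>x. lt x v* sqrtR = lam x v* W x" "\<And>x. norm (lt x) = norm (lam x)"
      by metis
    have fe: "f x = proj_compl (gV x) *v f x
              + ((h x \<bullet> (Q *v h x) - (norm (lt x))\<^sup>2) / (norm (gV x))\<^sup>2) *\<^sub>R gV x" for x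
      using a0[of x] hf lt(2)[of x] by (simp add: proj_mv power2_norm_eq_inner)
    have ge: "g x = proj_compl (gV x) ** g x
              + (2 / (norm (gV x))\<^sup>2) *\<^sub>R outer_prod (gV x) (h x v* S - lt x v* sqrtR)" for x
    proof -
      have "h x v* S - lt x v* sqrtR = (1/2) *\<^sub>R (gV x v* g x)" using hg lt(1) by simp
      then show ?thesis using a0[of x]
        by (simp add: proj_mm outer_scale power2_norm_eq_inner)
    qed
    show "\<exists>lt. (f, g, h) = proj_PlV Q S sqrtR lt gV (f, g, h)"
      by (rule exI[of _ lt]) (simp add: proj_PlV_def fun_eq_iff fe[symmetric] ge[symmetric])
  qed
  show ?thesis using A B C by blast
qed

end
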